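(* Let $r\geq 1$ and $n_1,\ldots,n_r>1$ be integers, let $R=\mathbb{Z}_{n_1}\oplus\cdots\oplus \mathbb{Z}_{n_r}$, and let $\mathcal{S}_R$ be the multiplicative semigroup of $R$, with its operation written as $+$. Let $a,b\in\mathcal{S}_R$. Then: (i) If $a \leqq_{\mathcal{H}} b$, then $\gcd(\kappa_i(\theta_b),n_i)\mid \gcd(\kappa_i(\theta_a),n_i)$ for each $i\in [1,r]$, and ${\rm St}(b)\subseteq{\rm St}(a)$. (ii) $a \ \mathcal{H} \ b$ if and only if $\gcd(\kappa_i(\theta_b),n_i)= \gcd(\kappa_i(\theta_a),n_i)$ for each $i\in [1,r]$. (iii) Suppose $a <_{\mathcal{H}} b$. If there exists an index $t\in [1,r]$ such that either ${\rm pot}_{p}(\gcd(\kappa_t(\theta_b), n_t))<{\rm pot}_{p}(\gcd(\kappa_t(\theta_a), n_t))$ for some prime $p>2$, or ${\rm pot}_2(\gcd(\kappa_t(\theta_b), n_t))<{\rm pot}_2(\gcd(\kappa_t(\theta_a), n_t))< {\rm pot}_2(n_t)$, then ${\rm St}(b)\subsetneq {\rm St}(a)$.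
   Context: The operation of $\mathcal{S}_R$ is the ring multiplication of $R$, written additively as $+$; its identity element $0_{\mathcal{S}_R}$ is $(\overline{1},\ldots,\overline{1})$, and ${\rm U}(\mathcal{S}_R)$ is its group of units (elements with an inverse under this operation). For ${\bf a}\in\mathcal{S}_R$, $\theta_{\bf a}=(a_1,\ldots,a_r)\in[1,n_1]\times\cdots\times[1,n_r]$ is the unique integer tuple with ${\bf a}=(\overline{a}_1,\ldots,\overline{a}_r)$, and $\kappa_i(\theta_{\bf a})=a_i$. For $c\in\mathcal{S}_R$, ${\rm St}(c)=\{u\in {\rm U}(\mathcal{S}_R): u+c=c\}$. Green's preorder: $a\leqq_{\mathcal{H}} b$ iff $a=b$ or $a=b+c$ for some $c\in\mathcal{S}_R$; $a\ \mathcal{H}\ b$ iff $a\leqq_{\mathcal{H}} b$ and $b\leqq_{\mathcal{H}} a$; $a<_{\mathcal{H}} b$ means $a\leqq_{\mathcal{H}} b$ but not $a\ \mathcal{H}\ b$. For a prime $p$ and nonzero integer $n$, ${\rm pot}_p(n)$ is the largest $k$ with $p^k\mid n$. *)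

theory Defs
  imports "HOL-Computational_Algebra.Computational_Algebra"
begin

text \<open>Elements of R = Z_{n_1} + ... + Z_{n_r} are represented as functions
  a :: nat => nat with a i in {0..<n i} for i in {1..r} (the residue class of a i)
  and a i = 0 outside {1..r}.\<close>

definition SR :: "nat \<Rightarrow> (nat \<Rightarrow> nat) \<Rightarrow> (nat \<Rightarrow> nat) set" where
  "SR r n = {a. (\<forall>i\<in>{1..r}. a i < n i) \<and> (\<forall>i. i \<notin> {1..r} \<longrightarrow> a i = 0)}"

definition sadd :: "nat \<Rightarrow> (nat \<Rightarrow> nat) \<Rightarrow> (nat \<Rightarrow> nat) \<Rightarrow> (nat \<Rightarrow> nat) \<Rightarrow> (nat \<Rightarrow> nat)" where
  "sadd r n a b = (\<lambda>i. if i \<in> {1..r} then (a i * b i) mod n i else 0)"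

definition szero :: "nat \<Rightarrow> (nat \<Rightarrow> nat) \<Rightarrow> (nat \<Rightarrow> nat)" where
  "szero r n = (\<lambda>i. if i \<in> {1..r} then 1 mod n i else 0)"

definition SUnits :: "nat \<Rightarrow> (nat \<Rightarrow> nat) \<Rightarrow> (nat \<Rightarrow> nat) set" where
  "SUnits r n = {u \<in> SR r n. \<exists>v \<in> SR r n. sadd r n u v = szero r n \<and> sadd r n v u = szero r n}"

definition St :: "nat \<Rightarrow> (nat \<Rightarrow> nat) \<Rightarrow> (nat \<Rightarrow> nat) \<Rightarrow> (nat \<Rightarrow> nat) set" where
  "St r n c = {u \<in> SUnits r n. sadd r n u c = c}"

definition Hleq :: "nat \<Rightarrow> (nat \<Rightarrow> nat) \<Rightarrow> (nat \<Rightarrow> nat) \<Rightarrow> (nat \<Rightarrow> nat) \<Rightarrow> bool" where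
  "Hleq r n a b \<longleftrightarrow> a = b \<or> (\<exists>c \<in> SR r n. a = sadd r n b c)"

definition Hrel :: "nat \<Rightarrow> (nat \<Rightarrow> nat) \<Rightarrow> (nat \<Rightarrow> nat) \<Rightarrow> (nat \<Rightarrow> nat) \<Rightarrow> bool" where
  "Hrel r n a b \<longleftrightarrow> Hleq r n a b \<and> Hleq r n b a"

definition Hless :: "nat \<Rightarrow> (nat \<Rightarrow> nat) \<Rightarrow> (nat \<Rightarrow> nat) \<Rightarrow> (nat \<Rightarrow> nat) \<Rightarrow> bool" where
  "Hless r n a b \<longleftrightarrow> Hleq r n a b \<and> \<not> Hrel r n a b"

text \<open>theta: the unique representative tuple in [1,n_1] x ... x [1,n_r];
  kappa_i(theta a) = theta n a i.\<close>
definition theta :: "(nat \<Rightarrow> nat) \<Rightarrow> (nat \<Rightarrow> nat) \<Rightarrow> nat \<Rightarrow> nat" where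
  "theta n a i = (if a i = 0 then n i else a i)"

definition pot :: "nat \<Rightarrow> nat \<Rightarrow> nat" where
  "pot p m = multiplicity p m"

end

theory Submission imports Defs "HOL-Number_Theory.Cong" begin

lemma core:
  fixes n ga gb p :: nat
  assumes n1: "n > 1" and ga: "ga dvd n" and gb: "gb dvd n" and p: "prime p"
    and lt: "multiplicity p gb < multiplicity p ga"
    and p2: "p > 2 \<or> multiplicity p ga < multiplicity p n"
  shows "\<exists>w. (n div ga) dvd w \<and> \<not> (n div gb) dvd w \<and> coprime (1+w) n"
proof -
  define e where "e = multiplicity p n"
  define \<alpha> where "\<alpha> = multiplicity p ga"
  define \<beta> where "\<beta> = multiplicity p gb"
  have nu: "\<not> is_unit p" using p not_prime_unit by blast
  have n0: "n \<noteq> 0" using n1 by simp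
  have gb0: "gb \<noteq> 0" using gb n0 by auto
  obtain n' where n': "n = p^e * n'" "\<not> p dvd n'"
    using multiplicity_decompose'[of n p] e_def nu n0 by metis
  have "\<alpha> \<le> e" unfolding \<alpha>_def e_def using dvd_imp_multiplicity_le[OF ga n0] .
  define s :: nat where "s = (if p dvd (1+n') \<and> p > 2 then 2 else 1)"
  have ps: "\<not> p dvd s"
  proof
    assume "p dvd s"
    then show False unfolding s_def using p nu
      by (auto split: if_splits dest: dvd_imp_le)
  qed
  define w where "w = p^(e-\<beta>-1) * n' * s"
  have "w = p^(e-\<beta>-1) * n' * s" by (fact w_def)
  obtain x where x: "ga = p^\<alpha> * x" using multiplicity_dvd[of p ga] \<alpha>_def by (metis dvdE)
  obtain y where y: "n = ga * y" using ga by blast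
  have ppos: "p > 0" using p prime_gt_0_nat by blast
  have "p^e = p^\<alpha> * p^(e-\<alpha>)" using \<open>\<alpha> \<le> e\<close> by (metis le_add_diff_inverse power_add)
  hence "p^\<alpha> * (x*y) = p^\<alpha> * (p^(e-\<alpha>) * n')"
    using x y n' by (auto simp add: mult.assoc)
  hence xy: "x*y = p^(e-\<alpha>) * n'" using ppos by simp
  have ndga: "n div ga = y" using y n1 by (metis gr_implies_not0 mult_eq_0_iff nonzero_mult_div_cancel_left)
  have d1: "(n div ga) dvd w"
  proof -
    have "y dvd p^(e-\<alpha>) * n'" using xy by (metis dvd_triv_right)
    moreover have "p^(e-\<alpha>) * n' dvd w"
    proof -
      have "e-\<alpha> \<le> e-\<beta>-1" using \<open>\<alpha> \<le> e\<close> lt \<alpha>_def \<beta>_def by simp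
      hence "p^(e-\<alpha>) dvd p^(e-\<beta>-1)" by (rule le_imp_power_dvd)
      hence "p^(e-\<alpha>) * n' dvd p^(e-\<beta>-1) * n'" by (rule mult_dvd_mono) simp
      thus ?thesis by (simp add: w_def dvd_mult2)
    qed
    ultimately show ?thesis using ndga by (metis dvd_trans)
  qed
  obtain z where z: "gb = p^\<beta> * z" "\<not> p dvd z"
    using multiplicity_decompose'[of gb p] \<beta>_def nu gb0 by metis
  obtain y' where y': "n = gb * y'" using gb by blast
  have "\<beta> \<le> e" using lt \<open>\<alpha> \<le> e\<close> \<alpha>_def \<beta>_def by simp
  have "p^e = p^\<beta> * p^(e-\<beta>)" using \<open>\<beta> \<le> e\<close> by (metis le_add_diff_inverse power_add)
  hence "p^\<beta> * (z*y') = p^\<beta> * (p^(e-\<beta>) * n')"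
    using z y' n' by (auto simp add: mult.assoc)
  hence zy: "z*y' = p^(e-\<beta>) * n'" using ppos by simp
  have "p^(e-\<beta>) dvd z * y'" using zy by simp
  moreover have "coprime (p^(e-\<beta>)) z" using z(2) p prime_imp_power_coprime coprime_commute by blast
  ultimately have py': "p^(e-\<beta>) dvd y'" using coprime_dvd_mult_right_iff by blast
  have ndgb: "n div gb = y'" using y' n1 by (metis gr_implies_not0 mult_eq_0_iff nonzero_mult_div_cancel_left)
  have d2: "\<not> (n div gb) dvd w"
  proof
    assume "(n div gb) dvd w"
    hence "p^(e-\<beta>) dvd w" using py' ndgb dvd_trans by blast
    moreover have "e - \<beta> = Suc (e-\<beta>-1)" using lt \<open>\<alpha> \<le> e\<close> \<alpha>_def \<beta>_def by simp
    ultimately have "p^(e-\<beta>-1) * p dvd p^(e-\<beta>-1) * (n' * s)" unfolding w_def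
      by (metis mult.assoc power_Suc2)
    hence "p dvd n' * s" using ppos by simp
    thus False using p n'(2) ps prime_dvd_mult_iff by blast
  qed
  have c1: "coprime (1+w) n'"
  proof (rule coprimeI)
    fix d assume "d dvd 1+w" "d dvd n'"
    hence "d dvd w" unfolding w_def by simp
    with \<open>d dvd 1+w\<close> have "d dvd 1" using dvd_add_left_iff by blast
    thus "is_unit d" by simp
  qed
  have np: "\<not> p dvd 1+w"
  proof (cases "e-\<beta>-1 = 0")
    case True
    have "\<not> (p = 2)"
    proof
      assume "p = 2"
      hence "\<alpha> < e" using p2 \<alpha>_def e_def by auto
      thus False using True lt \<alpha>_def \<beta>_def by simp
    qed
    moreover have "p \<ge> 2" using prime_ge_2_nat[OF p] .
    ultimately have p3: "p > 2" by simp
    have w: "w = n' * s" using True w_def by simp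
    show ?thesis
    proof (cases "p dvd 1+n'")
      case True
      hence "s = 2" using s_def p3 by simp
      show ?thesis
      proof
        assume "p dvd 1+w"
        hence "p dvd (1 + 2*n')" using w \<open>s=2\<close> by (simp add: mult.commute)
        moreover have "1 + 2*n' = (1+n') + n'" by simp
        ultimately have "p dvd n'" using dvd_add_right_iff[OF True, of n'] by (simp add: mult_2)
        thus False using n' by blast
      qed
    next
      case False
      hence "s = 1" using s_def by simp
      thus ?thesis using w False by simp
    qed
  next
    case False
    hence "p dvd w" unfolding w_def by (simp add: dvd_power)
    hence "p dvd w + 1 \<longleftrightarrow> p dvd 1" by (rule dvd_add_right_iff)
    thus ?thesis using nu by (simp add: add.commute)
  qed
  have c2: "coprime (1+w) (p^e)" using np p prime_imp_power_coprime by blast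
  have "coprime (1+w) n" using c1 c2 n' by simp
  thus ?thesis using d1 d2 by blast
qed


lemma solve_coord:
  fixes n a b :: nat
  assumes "n > 0" "a < n" "gcd b n dvd a"
  shows "\<exists>c<n. (b*c) mod n = a"
proof (cases "b = 0")
  case True
  then have "n dvd a" using assms by simp
  then have "a = 0" using assms by (cases "a = 0") (auto dest: dvd_imp_le)
  then show ?thesis using assms True by auto
next
  case False
  obtain x y where xy: "b*x = n*y + gcd b n" using bezout_nat[OF False, of n] by blast
  obtain m where m: "a = gcd b n * m" using assms(3) by blast
  have "b*(x*m) = n*(y*m) + a" using xy m by (metis add_mult_distrib mult.assoc)
  hence "(b*(x*m)) mod n = a" using assms by simp
  hence "(b*((x*m) mod n)) mod n = a" by (simp add: mod_mult_right_eq)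
  moreover have "(x*m) mod n < n" using assms(1) by simp
  ultimately show ?thesis by blast
qed

lemma div_coord:
  fixes n a b c :: nat
  assumes "(b*c) mod n = a"
  shows "gcd b n dvd gcd a n"
proof -
  have "gcd b n dvd b*c" by simp
  hence "gcd b n dvd (b*c) mod n" by (simp add: dvd_mod)
  thus ?thesis using assms by simp
qed

lemma dvd_mult_gcd:
  fixes n x w :: nat
  assumes "n > 0"
  shows "n dvd w*x \<longleftrightarrow> (n div gcd x n) dvd w"
proof -
  define g where "g = gcd x n"
  have g0: "g > 0" using assms g_def by simp
  obtain n1 where n1: "n = g * n1" using g_def by (metis gcd_dvd2 dvdE)
  obtain x1 where x1: "x = g * x1" using g_def by (metis gcd_dvd1 dvdE)
  have nd: "n div g = n1" using n1 g0 by simp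
  have "coprime (x div g) (n div g)"
    using div_gcd_coprime[of x n] assms g_def by simp
  moreover have "x div g = x1" using x1 g0 by simp
  ultimately have cop: "coprime n1 x1" using nd by (simp add: coprime_commute)
  have "n dvd w*x \<longleftrightarrow> g*n1 dvd g*(w*x1)" using n1 x1 by (simp add: ac_simps)
  also have "\<dots> \<longleftrightarrow> n1 dvd w*x1" using g0 by simp
  also have "\<dots> \<longleftrightarrow> n1 dvd w" using coprime_dvd_mult_left_iff[OF cop] .
  finally show ?thesis using nd g_def by simp
qed

lemma key_coord:
  fixes n x w :: nat
  assumes "n > 0" "x < n"
  shows "(((1+w) mod n) * x) mod n = x \<longleftrightarrow> (n div gcd x n) dvd w"
proof -
  have "(((1+w) mod n) * x) mod n = ((1+w) * x) mod n" by (simp add: mod_mult_left_eq)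
  also have "\<dots> = (x + w*x) mod n" by (simp add: algebra_simps)
  finally have "(((1+w) mod n) * x) mod n = (x + w*x) mod n" .
  hence "(((1+w) mod n) * x) mod n = x \<longleftrightarrow> [x + w*x = x] (mod n)"
    using assms by (simp add: cong_def)
  also have "\<dots> \<longleftrightarrow> n dvd w*x" by (simp add: cong_add_lcancel_0_nat cong_0_iff)
  finally show ?thesis using dvd_mult_gcd[OF assms(1)] by simp
qed

lemma sadd_assoc: "sadd r n u (sadd r n b c) = sadd r n (sadd r n u b) c"
proof -
  have "\<And>i. (u i * (b i * c i mod n i)) mod n i = ((u i * b i) mod n i * c i) mod n i"
    by (simp add: mod_mult_right_eq mod_mult_left_eq mult.assoc)
  thus ?thesis unfolding sadd_def by (simp add: fun_eq_iff)
qed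

lemma gcd_theta: "gcd (theta n a i) (n i) = gcd (a i) (n i)"
  by (simp add: theta_def)


lemma SR_D: "x \<in> SR r n \<Longrightarrow> i \<in> {1..r} \<Longrightarrow> x i < n i"
  "x \<in> SR r n \<Longrightarrow> i \<notin> {1..r} \<Longrightarrow> x i = 0"
  by (auto simp: SR_def)

lemma sadd_comm: "sadd r n u v = sadd r n v u"
proof (rule ext)
  fix i show "sadd r n u v i = sadd r n v u i" by (simp add: sadd_def mult.commute)
qed

lemma part1:
  assumes "x \<in> SR r n" "y \<in> SR r n" "Hleq r n x y"
  shows "(\<forall>i\<in>{1..r}. gcd (y i) (n i) dvd gcd (x i) (n i)) \<and> St r n y \<subseteq> St r n x"
proof -
  consider "x = y" | c where "c \<in> SR r n" "x = sadd r n y c" using assms(3) by (auto simp: Hleq_def)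
  then show ?thesis
  proof cases
    case 1 then show ?thesis by simp
  next
    case 2
    have g: "\<forall>i\<in>{1..r}. gcd (y i) (n i) dvd gcd (x i) (n i)"
    proof
      fix i assume "i \<in> {1..r}"
      hence "(y i * c i) mod n i = x i" using 2 by (simp add: sadd_def)
      thus "gcd (y i) (n i) dvd gcd (x i) (n i)" by (rule div_coord)
    qed
    have "St r n y \<subseteq> St r n x"
    proof
      fix u assume u: "u \<in> St r n y"
      hence "sadd r n u x = sadd r n (sadd r n u y) c" using 2 sadd_assoc by metis
      also have "\<dots> = x" using u 2 by (simp add: St_def)
      finally show "u \<in> St r n x" using u by (simp add: St_def)
    qed
    thus ?thesis using g by simp
  qed
qed

lemma part2:
  assumes "x \<in> SR r n" "y \<in> SR r n" "\<forall>i\<in>{1..r}. n i > 1"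
    and g: "\<forall>i\<in>{1..r}. gcd (y i) (n i) dvd gcd (x i) (n i)"
  shows "Hleq r n x y"
proof -
  define c where "c = (\<lambda>i. if i \<in> {1..r} then (SOME c. c < n i \<and> (y i * c) mod n i = x i) else 0)"
  have ci: "c i < n i \<and> (y i * c i) mod n i = x i" if i: "i \<in> {1..r}" for i
  proof -
    have "gcd (y i) (n i) dvd x i" using g i dvd_trans gcd_dvd1 by blast
    hence "\<exists>c<n i. (y i * c) mod n i = x i"
      using solve_coord[of "n i" "x i" "y i"] assms(3) i SR_D(1)[OF assms(1) i] by auto
    hence "\<exists>c. c < n i \<and> (y i * c) mod n i = x i" by blast
    from someI_ex[OF this] show ?thesis using i c_def by simp
  qed
  have "c \<in> SR r n" using ci by (auto simp: SR_def c_def)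
  moreover have "x = sadd r n y c"
  proof
    fix i show "x i = sadd r n y c i"
      using ci[of i] SR_D(2)[OF assms(1), of i] by (cases "i \<in> {1..r}") (auto simp: sadd_def)
  qed
  ultimately show ?thesis by (auto simp: Hleq_def)
qed

theorem lemma2p2:
  fixes r :: nat and n :: "nat \<Rightarrow> nat" and a b :: "nat \<Rightarrow> nat"
  assumes "r \<ge> 1" and "\<forall>i\<in>{1..r}. n i > 1"
    and "a \<in> SR r n" and "b \<in> SR r n"
  shows "(Hleq r n a b \<longrightarrow>
            (\<forall>i\<in>{1..r}. gcd (theta n b i) (n i) dvd gcd (theta n a i) (n i))
            \<and> St r n b \<subseteq> St r n a)
     \<and> (Hrel r n a b \<longleftrightarrow>
            (\<forall>i\<in>{1..r}. gcd (theta n b i) (n i) = gcd (theta n a i) (n i)))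
     \<and> (Hless r n a b \<longrightarrow>
          (\<exists>t\<in>{1..r}.
              (\<exists>p. prime p \<and> p > 2 \<and>
                   pot p (gcd (theta n b t) (n t)) < pot p (gcd (theta n a t) (n t)))
            \<or> (pot 2 (gcd (theta n b t) (n t)) < pot 2 (gcd (theta n a t) (n t))
               \<and> pot 2 (gcd (theta n a t) (n t)) < pot 2 (n t)))
          \<longrightarrow> St r n b \<subset> St r n a)"
proof -
  note sa = assms(3) and sb = assms(4)
  have I: "Hleq r n a b \<longrightarrow>
            (\<forall>i\<in>{1..r}. gcd (theta n b i) (n i) dvd gcd (theta n a i) (n i))
            \<and> St r n b \<subseteq> St r n a"
    using part1[OF sa sb] by (simp add: gcd_theta)
  have II: "Hrel r n a b \<longleftrightarrow>
            (\<forall>i\<in>{1..r}. gcd (theta n b i) (n i) = gcd (theta n a i) (n i))"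
  proof
    assume "Hrel r n a b"
    hence "Hleq r n a b" "Hleq r n b a" by (auto simp: Hrel_def)
    from part1[OF sa sb this(1)] part1[OF sb sa this(2)]
    show "\<forall>i\<in>{1..r}. gcd (theta n b i) (n i) = gcd (theta n a i) (n i)"
      by (auto simp: gcd_theta intro: dvd_antisym)
  next
    assume "\<forall>i\<in>{1..r}. gcd (theta n b i) (n i) = gcd (theta n a i) (n i)"
    hence e: "\<forall>i\<in>{1..r}. gcd (b i) (n i) = gcd (a i) (n i)" by (simp add: gcd_theta)
    have "Hleq r n a b" using part2[OF sa sb assms(2)] e by simp
    moreover have "Hleq r n b a" using part2[OF sb sa assms(2)] e by simp
    ultimately show "Hrel r n a b" by (simp add: Hrel_def)
  qed
  have III: "Hless r n a b \<longrightarrow>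
          (\<exists>t\<in>{1..r}.
              (\<exists>p. prime p \<and> p > 2 \<and>
                   pot p (gcd (theta n b t) (n t)) < pot p (gcd (theta n a t) (n t)))
            \<or> (pot 2 (gcd (theta n b t) (n t)) < pot 2 (gcd (theta n a t) (n t))
               \<and> pot 2 (gcd (theta n a t) (n t)) < pot 2 (n t)))
          \<longrightarrow> St r n b \<subset> St r n a"
  proof (intro impI)
    assume "Hless r n a b"
    hence sub: "St r n b \<subseteq> St r n a" using part1[OF sa sb] by (simp add: Hless_def)
    assume "\<exists>t\<in>{1..r}.
              (\<exists>p. prime p \<and> p > 2 \<and>
                   pot p (gcd (theta n b t) (n t)) < pot p (gcd (theta n a t) (n t)))
            \<or> (pot 2 (gcd (theta n b t) (n t)) < pot 2 (gcd (theta n a t) (n t))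
               \<and> pot 2 (gcd (theta n a t) (n t)) < pot 2 (n t))"
    then obtain t where t: "t \<in> {1..r}" and disj: "(\<exists>p. prime p \<and> p > 2 \<and>
                   multiplicity p (gcd (b t) (n t)) < multiplicity p (gcd (a t) (n t)))
            \<or> (multiplicity 2 (gcd (b t) (n t)) < multiplicity 2 (gcd (a t) (n t))
               \<and> multiplicity 2 (gcd (a t) (n t)) < multiplicity 2 (n t))"
      unfolding pot_def gcd_theta by blast
    obtain p where p: "prime p"
      and lt: "multiplicity p (gcd (b t) (n t)) < multiplicity p (gcd (a t) (n t))"
      and p2: "p > 2 \<or> multiplicity p (gcd (a t) (n t)) < multiplicity p (n t)"
    proof (rule disjE[OF disj])
      assume "\<exists>p. prime p \<and> p > 2 \<and>
                   multiplicity p (gcd (b t) (n t)) < multiplicity p (gcd (a t) (n t))"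
      then obtain p where "prime p" "p > 2"
        "multiplicity p (gcd (b t) (n t)) < multiplicity p (gcd (a t) (n t))" by blast
      thus thesis using that by blast
    next
      assume "multiplicity 2 (gcd (b t) (n t)) < multiplicity 2 (gcd (a t) (n t))
               \<and> multiplicity 2 (gcd (a t) (n t)) < multiplicity 2 (n t)"
      thus thesis using that[of 2] two_is_prime_nat by blast
    qed
    define N where "N = n t"
    have N1: "N > 1" using assms(2) t N_def by simp
    obtain w where w1: "(N div gcd (a t) N) dvd w" and w2: "\<not> (N div gcd (b t) N) dvd w"
      and cw: "coprime (1+w) N"
      using core[OF N1 _ _ p lt[folded N_def] p2[folded N_def]] by auto
    obtain v0 where v0: "[(1+w) * v0 = Suc 0] (mod N)" using cong_solve_coprime_nat[OF cw] by blast
    define u where "u = (\<lambda>i. if i = t then (1+w) mod N else if i \<in> {1..r} then 1 else 0)"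
    define v where "v = (\<lambda>i. if i = t then v0 mod N else if i \<in> {1..r} then 1 else 0)"
    have Nt: "n t > 0" using N1 N_def by simp
    have m1: "(1+w) mod N < n t" "v0 mod N < n t" using N1 N_def by simp_all
    have uSR: "u \<in> SR r n" using m1 t assms(2) unfolding SR_def u_def by auto
    have vSR: "v \<in> SR r n" using m1 t assms(2) unfolding SR_def v_def by auto
    have "sadd r n u v = szero r n"
    proof
      fix i
      show "sadd r n u v i = szero r n i"
      proof (cases "i = t")
        case True
        have "((1+w) mod N * (v0 mod N)) mod N = ((1+w) * v0) mod N"
          by (simp add: mod_mult_right_eq mod_mult_left_eq)
        also have "\<dots> = 1 mod N" using v0 by (simp add: cong_def)
        finally show ?thesis using True t by (simp add: sadd_def szero_def u_def v_def N_def)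
      next
        case False
        then show ?thesis by (simp add: sadd_def szero_def u_def v_def)
      qed
    qed
    hence uU: "u \<in> SUnits r n" using uSR vSR sadd_comm[of r n v u] by (auto simp: SUnits_def)
    have "sadd r n u a = a"
    proof
      fix i
      show "sadd r n u a i = a i"
      proof (cases "i = t")
        case True
        have "a t < N" using SR_D(1)[OF sa t] N_def by simp
        hence "(((1+w) mod N) * a t) mod N = a t" using key_coord[of N "a t" w] N1 w1 by simp
        thus ?thesis using True t by (simp add: sadd_def u_def N_def)
      next
        case False
        then show ?thesis using SR_D[OF sa, of i] by (auto simp: sadd_def u_def)
      qed
    qed
    hence ua: "u \<in> St r n a" using uU by (simp add: St_def)
    have "sadd r n u b \<noteq> b"
    proof
      assume "sadd r n u b = b"
      hence "sadd r n u b t = b t" by simp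
      hence "(((1+w) mod N) * b t) mod N = b t" using t by (simp add: sadd_def u_def N_def)
      moreover have "b t < N" using SR_D(1)[OF sb t] N_def by simp
      ultimately show False using key_coord[of N "b t" w] N1 w2 by simp
    qed
    hence "u \<notin> St r n b" by (simp add: St_def)
    thus "St r n b \<subset> St r n a" using sub ua by blast
  qed
  show ?thesis using I II III by blast
qed

end
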